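(* Let $S'$ be a finite set of polynomials in $\mathbb{Q}[\alpha_1,\dots,\alpha_r]$, let $c\in\mathbb{Q}$ be a constant, and let $S=S'\cup\{c\}$. Then $S$ is compatibility graph reducible if and only if $S'$ is compatibility graph reducible.
   Context: A polynomial is called linear in a variable $x$ if its degree in $x$ is at most one (it may be constant in $x$). One reduction step. Let $T=\{f_1,\dots,f_m\}$ be a finite set of polynomials with rational coefficients, together with a graph $C$ on vertex set $T$ (its compatibility graph), and let $x$ be a variable. If some $f_i$ is not linear in $x$, the step is undefined. Otherwise write $f_i=g_ix+h_i$ with $g_i=\partial f_i/\partial x$ and $h_i=f_i|_{x=0}$. Let $S^1=\{g_i\}$, $S^2=\{h_i\}$, $S^3=\{g_ih_j-h_ig_j : i\neq j,\ f_if_j\in E(C)\}$, and let $T_{(x)}$ be the set of irreducible factors over $\mathbb{Q}$ of the polynomials in $S^1\cup S^2\cup S^3$. Each $q\in T_{(x)}$ receives a set of labels (2-element sets): the label $\{0,i\}$ if $q$ is an irreducible factor of $g_i$; the label $\{i,\infty\}$ if $q$ is an irreducible factor of $h_i$, and additionally the label $\{0,i\}$ if moreover $h_i=f_i$; the label $\{i,j\}$ if $q$ is an irreducible factor of $g_ih_j-h_ig_j\in S^3$. The new compatibility graph $C_{(x)}$ on vertex set $T_{(x)}$ has $qq'$ as an edge iff some label of $q$ and some label of $q'$ have nonempty intersection. Full reduction. Let $S\subseteq\mathbb{Q}[\alpha_1,\dots,\alpha_r]$ be finite and $\sigma$ a permutation of the variables; write $\sigma(i)$ for the $i$-th variable in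 the order. Let $(S_{[\sigma(1)]},C_{[\sigma(1)]})$ be the result of one reduction step with variable $\sigma(1)$ applied to $S$ with the complete graph as compatibility graph. For $k\ge 2$ define inductively $S_{[\sigma(1),\dots,\sigma(k)]}=\bigcap_{1\le i\le k} S_{[\sigma(1),\dots,\widehat{\sigma(i)},\dots,\sigma(k)](\sigma(i))}$, where the subscript $(\sigma(i))$ means one reduction step with variable $\sigma(i)$ applied to the set $S_{[\sigma(1),\dots,\widehat{\sigma(i)},\dots,\sigma(k)]}$ with its compatibility graph; in these intersections polynomials differing by a nonzero constant factor are identified. The compatibility graph $C_{[\sigma(1),\dots,\sigma(k)]}$ has $fg$ as an edge iff $fg$ is an edge of every $C_{[\sigma(1),\dots,\widehat{\sigma(i)},\dots,\sigma(k)](\sigma(i))}$. $S$ is compatibility graph reducible with respect to $\sigma$ if for all $1\le i\le r-1$ the set $S_{[\sigma(1),\dots,\sigma(i)]}$ is defined and all its polynomials are linear in $\sigma(i+1)$. $S$ is compatibility graph reducible if it is so with respect to some permutation $\sigma$. *)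

theory Defs
  imports Complex_Main "HOL-Library.Poly_Mapping" "HOL-Computational_Algebra.Factorial_Ring"
begin

text \<open>Multivariate polynomials over the rationals in the variables 0,1,2,...
  (variable i stands for alpha_(i+1)); a monomial is a finitely supported
  exponent vector nat \<Rightarrow>0 nat.\<close>
type_synonym mpoly = "(nat \<Rightarrow>\<^sub>0 nat) \<Rightarrow>\<^sub>0 rat"

definition mconst :: "rat \<Rightarrow> mpoly" where
  "mconst c = Poly_Mapping.single 0 c"

definition vars :: "mpoly \<Rightarrow> nat set" where
  "vars f = (\<Union>m\<in>Poly_Mapping.keys f. Poly_Mapping.keys m)"

definition linear_in :: "nat \<Rightarrow> mpoly \<Rightarrow> bool" where
  "linear_in x f \<longleftrightarrow> (\<forall>m\<in>Poly_Mapping.keys f. Poly_Mapping.lookup m x \<le> 1)"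

definition mderiv :: "nat \<Rightarrow> mpoly \<Rightarrow> mpoly" where
  "mderiv x f = (\<Sum>m\<in>Poly_Mapping.keys f. Poly_Mapping.single (m - Poly_Mapping.single x 1)
                                 (of_nat (Poly_Mapping.lookup m x) * Poly_Mapping.lookup f m))"

definition subst0 :: "nat \<Rightarrow> mpoly \<Rightarrow> mpoly" where
  "subst0 x f = (\<Sum>m\<in>Poly_Mapping.keys f. if Poly_Mapping.lookup m x = 0 then Poly_Mapping.single m (Poly_Mapping.lookup f m) else 0)"

text \<open>Canonical representative of the class of polynomials differing by a nonzero
  constant factor (used to identify such polynomials).\<close>
definition rep :: "mpoly \<Rightarrow> mpoly" where
  "rep q = (SOME p. \<exists>c. c \<noteq> 0 \<and> p = mconst c * q)"

definition irr_factor :: "mpoly \<Rightarrow> mpoly \<Rightarrow> bool" where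
  "irr_factor q p \<longleftrightarrow> p \<noteq> 0 \<and> irreducible q \<and> q dvd p"

text \<open>Graphs are given by their edge sets: sets of 2-element sets of vertices.\<close>
type_synonym graph = "mpoly set set"

definition complete_graph :: "mpoly set \<Rightarrow> graph" where
  "complete_graph T = {{f, g} | f g. f \<in> T \<and> g \<in> T \<and> f \<noteq> g}"

text \<open>Label symbols: 0, infinity, and the index of a polynomial f_i (identified with f_i).\<close>
datatype lsym = LZero | LInf | LIdx mpoly

definition S3 :: "nat \<Rightarrow> mpoly set \<Rightarrow> graph \<Rightarrow> mpoly set" where
  "S3 x T C = {mderiv x f * subst0 x g - subst0 x f * mderiv x g
                 | f g. f \<in> T \<and> g \<in> T \<and> f \<noteq> g \<and> {f, g} \<in> C}"

definition new_vertices :: "nat \<Rightarrow> mpoly set \<Rightarrow> graph \<Rightarrow> mpoly set" where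
  "new_vertices x T C = rep ` {q. \<exists>p \<in> mderiv x ` T \<union> subst0 x ` T \<union> S3 x T C. irr_factor q p}"

definition labels :: "nat \<Rightarrow> mpoly set \<Rightarrow> graph \<Rightarrow> mpoly \<Rightarrow> lsym set set" where
  "labels x T C q =
     {{LZero, LIdx f} | f. f \<in> T \<and> irr_factor q (mderiv x f)}
   \<union> {{LIdx f, LInf} | f. f \<in> T \<and> irr_factor q (subst0 x f)}
   \<union> {{LZero, LIdx f} | f. f \<in> T \<and> irr_factor q (subst0 x f) \<and> subst0 x f = f}
   \<union> {{LIdx f, LIdx g} | f g. f \<in> T \<and> g \<in> T \<and> f \<noteq> g \<and> {f, g} \<in> C \<and>
        irr_factor q (mderiv x f * subst0 x g - subst0 x f * mderiv x g)}"

definition new_graph :: "nat \<Rightarrow> mpoly set \<Rightarrow> graph \<Rightarrow> graph" where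
  "new_graph x T C = {{q, q'} | q q'. q \<in> new_vertices x T C \<and> q' \<in> new_vertices x T C \<and>
      q \<noteq> q' \<and> (\<exists>l\<in>labels x T C q. \<exists>l'\<in>labels x T C q'. l \<inter> l' \<noteq> {})}"

text \<open>One reduction step with variable x; None = undefined.\<close>
definition red_step :: "nat \<Rightarrow> mpoly set \<times> graph \<Rightarrow> (mpoly set \<times> graph) option" where
  "red_step x TC = (let T = fst TC; C = snd TC in
     if (\<forall>f\<in>T. linear_in x f) then Some (new_vertices x T C, new_graph x T C) else None)"

definition del_nth :: "nat \<Rightarrow> 'a list \<Rightarrow> 'a list" where
  "del_nth i xs = take i xs @ drop (Suc i) xs"

text \<open>Full reduction of S along the list of variables xs (xs = [sigma(1),...,sigma(k)]).
  The case n = 0 gives (S, complete graph); for k = 1 the general formula then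
  yields exactly the single reduction step of S with the complete graph.\<close>
primrec red_aux :: "mpoly set \<Rightarrow> nat \<Rightarrow> nat list \<Rightarrow> (mpoly set \<times> graph) option" where
  "red_aux S 0 xs = Some (S, complete_graph S)"
| "red_aux S (Suc n) xs =
     (let R = (\<lambda>i. Option.bind (red_aux S n (del_nth i xs)) (red_step (xs ! i))) in
      if (\<forall>i<length xs. R i \<noteq> None)
      then Some ((\<Inter>i\<in>{..<length xs}. fst (the (R i))), (\<Inter>i\<in>{..<length xs}. snd (the (R i))))
      else None)"

definition reduction :: "mpoly set \<Rightarrow> nat list \<Rightarrow> (mpoly set \<times> graph) option" where
  "reduction S xs = red_aux S (length xs) xs"

text \<open>sigma given as the list [sigma(1),...,sigma(r)] of the variables 0..r-1.\<close>
definition cg_reducible_wrt :: "nat \<Rightarrow> mpoly set \<Rightarrow> nat list \<Rightarrow> bool" where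
  "cg_reducible_wrt r S \<sigma> \<longleftrightarrow>
     (\<forall>i. 1 \<le> i \<and> i \<le> r - 1 \<longrightarrow>
        (\<exists>R. reduction S (take i \<sigma>) = Some R \<and> (\<forall>f\<in>fst R. linear_in (\<sigma> ! i) f)))"

definition cg_reducible :: "nat \<Rightarrow> mpoly set \<Rightarrow> bool" where
  "cg_reducible r S \<longleftrightarrow> (\<exists>\<sigma>. distinct \<sigma> \<and> set \<sigma> = {..<r} \<and> cg_reducible_wrt r S \<sigma>)"

end

theory Submission
  imports Defs
begin

lemma mconst_unit:
  assumes "c \<noteq> 0" shows "mconst c * mconst (inverse c) = 1"
  using assms by (simp add: mconst_def mult_single)

lemma mconst_zero_iff: "mconst c = 0 \<longleftrightarrow> c = 0"
  unfolding mconst_def by (metis lookup_single_eq single_zero lookup_zero)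

lemma linear_mconst: "linear_in x (mconst c)"
  by (simp add: linear_in_def mconst_def)

lemma mderiv_mconst: "mderiv x (mconst c) = 0"
proof -
  have "Poly_Mapping.keys (mconst c) \<subseteq> {0}" by (simp add: mconst_def)
  then show ?thesis unfolding mderiv_def
    by (intro sum.neutral) auto
qed

lemma subst0_mconst: "subst0 x (mconst c) = mconst c"
proof (cases "c = 0")
  case True then show ?thesis by (simp add: subst0_def mconst_def)
next
  case False
  then have "Poly_Mapping.keys (mconst c) = {0}" by (simp add: mconst_def)
  then show ?thesis unfolding subst0_def by (simp add: mconst_def)
qed

lemma not_irr_factor_const: "\<not> irr_factor q (mconst c)"
proof
  assume h: "irr_factor q (mconst c)"
  then have c: "c \<noteq> 0" and "q dvd mconst c" and "irreducible q"
    by (auto simp: irr_factor_def mconst_zero_iff)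
  then have "q dvd mconst c * mconst (inverse c)" by auto
  then have "q dvd 1" using mconst_unit[OF c] by simp
  then show False using \<open>irreducible q\<close> irreducible_not_unit by blast
qed

lemma irr_factor_const_mult:
  assumes "irr_factor q (mconst c * g)" shows "irr_factor q g"
proof -
  from assms have c: "c \<noteq> 0" and ne: "g \<noteq> 0" and d: "q dvd mconst c * g" and "irreducible q"
    by (auto simp: irr_factor_def mconst_zero_iff)
  from d have "q dvd mconst (inverse c) * (mconst c * g)" by (rule dvd_mult)
  moreover have e: "mconst (inverse c) * mconst c = 1" using mconst_unit[OF c] by (simp only: mult.commute)
  ultimately have "q dvd g" by (simp only: mult.assoc[symmetric] e mult_1_left)
  then show ?thesis using ne \<open>irreducible q\<close> by (simp add: irr_factor_def)
qed

lemma irr_factor_uminus: "irr_factor q (- g) \<longleftrightarrow> irr_factor q g"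
  by (simp add: irr_factor_def)

lemma irr_factor_zero: "\<not> irr_factor q 0"
  by (simp add: irr_factor_def)

lemma complete_graph_mem:
  assumes "f \<noteq> g" shows "{f, g} \<in> complete_graph T \<longleftrightarrow> f \<in> T \<and> g \<in> T"
  using assms unfolding complete_graph_def by (auto simp: doubleton_eq_iff)


locale cstep =
  fixes S :: "mpoly set" and c :: rat and x :: nat
  assumes notin: "mconst c \<notin> S"
begin

abbreviation "k \<equiv> mconst c"
abbreviation "A \<equiv> insert k S"
abbreviation "CA \<equiv> complete_graph A"
abbreviation "CS \<equiv> complete_graph S"

lemma S3_k1: "g \<in> S \<Longrightarrow> mderiv x k * subst0 x g - subst0 x k * mderiv x g = - (k * mderiv x g)"
  by (simp add: mderiv_mconst subst0_mconst)

lemma S3_k2: "f \<in> S \<Longrightarrow> mderiv x f * subst0 x k - subst0 x f * mderiv x k = k * mderiv x f"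
  by (simp add: mderiv_mconst subst0_mconst mult.commute)

lemma CS_sub: "CS \<subseteq> CA"
  unfolding complete_graph_def by blast

lemma factors_eq:
  "{q. \<exists>p \<in> mderiv x ` A \<union> subst0 x ` A \<union> S3 x A CA. irr_factor q p}
 = {q. \<exists>p \<in> mderiv x ` S \<union> subst0 x ` S \<union> S3 x S CS. irr_factor q p}"
proof (rule set_eqI, rule iffI)
  fix q
  assume "q \<in> {q. \<exists>p \<in> mderiv x ` A \<union> subst0 x ` A \<union> S3 x A CA. irr_factor q p}"
  then obtain p where p: "p \<in> mderiv x ` A \<union> subst0 x ` A \<union> S3 x A CA" and q: "irr_factor q p"
    by blast
  have "\<exists>p \<in> mderiv x ` S \<union> subst0 x ` S \<union> S3 x S CS. irr_factor q p"
  proof -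
    { assume "p \<in> mderiv x ` A"
      then have ?thesis using q by (auto simp: mderiv_mconst irr_factor_zero) }
    moreover
    { assume "p \<in> subst0 x ` A"
      then have ?thesis using q by (auto simp: subst0_mconst not_irr_factor_const) }
    moreover
    { assume "p \<in> S3 x A CA"
      then obtain f g where fg: "f \<in> A" "g \<in> A" "f \<noteq> g" "{f,g} \<in> CA"
        and pe: "p = mderiv x f * subst0 x g - subst0 x f * mderiv x g"
        unfolding S3_def by blast
      have ?thesis
      proof (cases "f = k")
        case True
        then have "g \<in> S" using fg by auto
        then show ?thesis using q pe True S3_k1[of g]
          by (auto simp: irr_factor_uminus dest: irr_factor_const_mult)
      next
        case f: False
        show ?thesis
        proof (cases "g = k")
          case True
          then have "f \<in> S" using fg f by auto
          then show ?thesis using q pe True S3_k2[of f]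
            by (auto dest: irr_factor_const_mult)
        next
          case False
          then have "f \<in> S" "g \<in> S" using fg f by auto
          moreover have "{f,g} \<in> CS" using complete_graph_mem[OF fg(3)] \<open>f \<in> S\<close> \<open>g \<in> S\<close> by blast
          ultimately have "p \<in> S3 x S CS" unfolding S3_def using pe fg(3) by blast
          then show ?thesis using q by blast
        qed
      qed }
    ultimately show ?thesis using p by blast
  qed
  then show "q \<in> {q. \<exists>p \<in> mderiv x ` S \<union> subst0 x ` S \<union> S3 x S CS. irr_factor q p}"
    by blast
next
  fix q
  assume "q \<in> {q. \<exists>p \<in> mderiv x ` S \<union> subst0 x ` S \<union> S3 x S CS. irr_factor q p}"
  then obtain p where p: "p \<in> mderiv x ` S \<union> subst0 x ` S \<union> S3 x S CS" and q: "irr_factor q p"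
    by blast
  have "S3 x S CS \<subseteq> S3 x A CA"
  proof
    fix p assume "p \<in> S3 x S CS"
    then obtain f g where "p = mderiv x f * subst0 x g - subst0 x f * mderiv x g" "f \<in> S" "g \<in> S" "f \<noteq> g" "{f, g} \<in> CS"
      unfolding S3_def by blast
    moreover have "{f,g} \<in> CA" using CS_sub \<open>{f, g} \<in> CS\<close> by blast
    ultimately show "p \<in> S3 x A CA" unfolding S3_def by blast
  qed
  then show "q \<in> {q. \<exists>p \<in> mderiv x ` A \<union> subst0 x ` A \<union> S3 x A CA. irr_factor q p}"
    using p q by blast
qed

lemma nv_eq: "new_vertices x A CA = new_vertices x S CS"
  unfolding new_vertices_def using factors_eq by simp

lemma L1: "labels x S CS q \<subseteq> labels x A CA q"
  unfolding labels_def
proof (intro Un_mono)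
  show "{{LIdx f, LIdx g} |f g. f \<in> S \<and> g \<in> S \<and> f \<noteq> g \<and> {f, g} \<in> CS \<and>
          irr_factor q (mderiv x f * subst0 x g - subst0 x f * mderiv x g)}
     \<subseteq> {{LIdx f, LIdx g} |f g. f \<in> A \<and> g \<in> A \<and> f \<noteq> g \<and> {f, g} \<in> CA \<and>
          irr_factor q (mderiv x f * subst0 x g - subst0 x f * mderiv x g)}"
  proof
    fix l assume "l \<in> {{LIdx f, LIdx g} |f g. f \<in> S \<and> g \<in> S \<and> f \<noteq> g \<and> {f, g} \<in> CS \<and>
          irr_factor q (mderiv x f * subst0 x g - subst0 x f * mderiv x g)}"
    then obtain f g where "l = {LIdx f, LIdx g}" "f \<in> S" "g \<in> S" "f \<noteq> g" "{f, g} \<in> CS"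
      "irr_factor q (mderiv x f * subst0 x g - subst0 x f * mderiv x g)" by blast
    moreover have "{f,g} \<in> CA" using CS_sub \<open>{f, g} \<in> CS\<close> by blast
    ultimately show "l \<in> {{LIdx f, LIdx g} |f g. f \<in> A \<and> g \<in> A \<and> f \<noteq> g \<and> {f, g} \<in> CA \<and>
          irr_factor q (mderiv x f * subst0 x g - subst0 x f * mderiv x g)}" by blast
  qed
qed blast+

lemma L2: "l \<in> labels x A CA q \<Longrightarrow> l \<in> labels x S CS q \<or>
   (\<exists>g\<in>S. l = {LIdx k, LIdx g} \<and> irr_factor q (mderiv x g))"
  unfolding labels_def
  apply (elim UnE)
  subgoal by (auto simp: mderiv_mconst irr_factor_zero)
  subgoal by (auto simp: subst0_mconst not_irr_factor_const)
  subgoal by (auto simp: subst0_mconst not_irr_factor_const)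
  subgoal
  proof -
    assume "l \<in> {{LIdx f, LIdx g} |f g. f \<in> A \<and> g \<in> A \<and> f \<noteq> g \<and> {f, g} \<in> CA \<and>
        irr_factor q (mderiv x f * subst0 x g - subst0 x f * mderiv x g)}"
    then obtain f g where fg: "f \<in> A" "g \<in> A" "f \<noteq> g" "{f,g} \<in> CA"
      and q: "irr_factor q (mderiv x f * subst0 x g - subst0 x f * mderiv x g)"
      and l: "l = {LIdx f, LIdx g}" by blast
    show ?thesis
    proof (cases "f = k")
      case True
      then have "g \<in> S" using fg by auto
      then show ?thesis using q l True S3_k1[of g]
        by (auto simp: irr_factor_uminus dest: irr_factor_const_mult)
    next
      case f: False
      show ?thesis
      proof (cases "g = k")
        case True
        then have "f \<in> S" using fg f by auto
        then show ?thesis using q l True S3_k2[of f]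
          by (auto dest: irr_factor_const_mult simp: insert_commute)
      next
        case False
        then have "f \<in> S" "g \<in> S" using fg f by auto
        moreover have "{f,g} \<in> CS" using complete_graph_mem[OF fg(3)] \<open>f \<in> S\<close> \<open>g \<in> S\<close> by blast
        ultimately have "l \<in> {{LIdx f, LIdx g} |f g. f \<in> S \<and> g \<in> S \<and> f \<noteq> g \<and> {f, g} \<in> CS \<and>
          irr_factor q (mderiv x f * subst0 x g - subst0 x f * mderiv x g)}"
          using q l fg(3) by blast
        then show ?thesis by (intro disjI1 UnI2)
      qed
    qed
  qed
  done

lemma L3: "l \<in> labels x S CS q \<Longrightarrow> LIdx k \<notin> l"
  unfolding labels_def using notin by auto

lemma L4: "g \<in> S \<Longrightarrow> irr_factor q (mderiv x g) \<Longrightarrow> {LZero, LIdx g} \<in> labels x S CS q"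
  unfolding labels_def by blast

lemma inter_eq:
  "(\<exists>l\<in>labels x A CA q. \<exists>l'\<in>labels x A CA q'. l \<inter> l' \<noteq> {}) \<longleftrightarrow>
   (\<exists>l\<in>labels x S CS q. \<exists>l'\<in>labels x S CS q'. l \<inter> l' \<noteq> {})"
proof
  assume "\<exists>l\<in>labels x A CA q. \<exists>l'\<in>labels x A CA q'. l \<inter> l' \<noteq> {}"
  then obtain l l' e where l: "l \<in> labels x A CA q" and l': "l' \<in> labels x A CA q'"
    and e: "e \<in> l" "e \<in> l'" by blast
  from L2[OF l] L2[OF l'] show "\<exists>l\<in>labels x S CS q. \<exists>l'\<in>labels x S CS q'. l \<inter> l' \<noteq> {}"
  proof (elim disjE bexE conjE)
    assume a: "l \<in> labels x S CS q" "l' \<in> labels x S CS q'"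
    have "l \<inter> l' \<noteq> {}" using e by (simp only: disjoint_iff) metis
    then show ?thesis using a by (intro bexI)
  next
    fix g assume a: "l \<in> labels x S CS q" "g \<in> S" "l' = {LIdx k, LIdx g}" "irr_factor q' (mderiv x g)"
    have "e \<noteq> LIdx k" using e(1) L3[OF a(1)] by metis
    then have eg: "e = LIdx g" using e(2) a(3) by simp
    have "l \<inter> {LZero, LIdx g} \<noteq> {}" using e(1) eg by blast
    then show ?thesis using a(1) L4[OF a(2) a(4)] by (intro bexI)
  next
    fix g assume a: "l' \<in> labels x S CS q'" "g \<in> S" "l = {LIdx k, LIdx g}" "irr_factor q (mderiv x g)"
    have "e \<noteq> LIdx k" using e(2) L3[OF a(1)] by metis
    then have eg: "e = LIdx g" using e(1) a(3) by simp
    have "{LZero, LIdx g} \<inter> l' \<noteq> {}" using e(2) eg by blast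
    then show ?thesis using a(1) L4[OF a(2) a(4)] by (intro bexI)
  next
    fix g g' assume a: "g \<in> S" "l = {LIdx k, LIdx g}" "irr_factor q (mderiv x g)"
      "g' \<in> S" "l' = {LIdx k, LIdx g'}" "irr_factor q' (mderiv x g')"
    have "{LZero, LIdx g} \<inter> {LZero, LIdx g'} \<noteq> {}" by simp
    then show ?thesis using L4[OF a(1) a(3)] L4[OF a(4) a(6)] by (intro bexI)
  qed
next
  assume "\<exists>l\<in>labels x S CS q. \<exists>l'\<in>labels x S CS q'. l \<inter> l' \<noteq> {}"
  then obtain l l' where "l\<in>labels x S CS q" "l'\<in>labels x S CS q'" "l \<inter> l' \<noteq> {}" by blast
  moreover have "l\<in>labels x A CA q" "l'\<in>labels x A CA q'"
    using subsetD[OF L1 calculation(1)] subsetD[OF L1 calculation(2)] by this+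
  ultimately show "\<exists>l\<in>labels x A CA q. \<exists>l'\<in>labels x A CA q'. l \<inter> l' \<noteq> {}"
    by (intro bexI)
qed

lemma ng_eq: "new_graph x A CA = new_graph x S CS"
  unfolding new_graph_def nv_eq inter_eq ..

lemma step_eq: "red_step x (A, CA) = red_step x (S, CS)"
  unfolding red_step_def Let_def fst_conv snd_conv nv_eq ng_eq using linear_mconst by auto

end

lemma step_eq_gen:
  "red_step x (insert (mconst c) S, complete_graph (insert (mconst c) S)) = red_step x (S, complete_graph S)"
proof (cases "mconst c \<in> S")
  case True then show ?thesis by (simp add: insert_absorb)
next
  case False
  then interpret cstep S c x by unfold_locales
  show ?thesis by (rule step_eq)
qed

lemma red_aux_eq:
  "(\<forall>xs x. Option.bind (red_aux (insert (mconst c) S) n xs) (red_step x)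
         = Option.bind (red_aux S n xs) (red_step x)) \<and>
   (\<forall>xs. red_aux (insert (mconst c) S) (Suc n) xs = red_aux S (Suc n) xs)"
proof (induction n)
  case 0
  have P: "\<And>xs x. Option.bind (red_aux (insert (mconst c) S) 0 xs) (red_step x)
         = Option.bind (red_aux S 0 xs) (red_step x)"
    by (simp only: red_aux.simps(1) bind.simps step_eq_gen)
  have Q: "red_aux (insert (mconst c) S) (Suc 0) xs = red_aux S (Suc 0) xs" for xs
    unfolding red_aux.simps(2)[of _ 0] by (simp only: P)
  show ?case using P Q by blast
next
  case (Suc n)
  have R: "red_aux (insert (mconst c) S) (Suc n) xs = red_aux S (Suc n) xs" for xs
    using Suc.IH by blast
  have P: "\<And>xs x. Option.bind (red_aux (insert (mconst c) S) (Suc n) xs) (red_step x)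
         = Option.bind (red_aux S (Suc n) xs) (red_step x)"
    by (simp only: R)
  have Q: "red_aux (insert (mconst c) S) (Suc (Suc n)) xs = red_aux S (Suc (Suc n)) xs" for xs
    unfolding red_aux.simps(2)[of _ "Suc n"] by (simp only: P)
  show ?case using P Q by blast
qed

theorem proposition3p5:
  fixes r :: nat and S' :: "mpoly set" and c :: rat
  assumes "finite S'"
    and "\<forall>f\<in>S'. vars f \<subseteq> {..<r}"
  shows "cg_reducible r (insert (mconst c) S') \<longleftrightarrow> cg_reducible r S'"
proof -
  have key: "cg_reducible_wrt r (insert (mconst c) S') \<sigma> \<longleftrightarrow> cg_reducible_wrt r S' \<sigma>"
    if "length \<sigma> = r" for \<sigma> :: "nat list"
  proof -
    have "reduction (insert (mconst c) S') (take i \<sigma>) = reduction S' (take i \<sigma>)"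
      if "1 \<le> i" "i \<le> r - 1" for i
    proof -
      have "length (take i \<sigma>) = i" using that \<open>length \<sigma> = r\<close> by simp
      moreover obtain n where "i = Suc n" using \<open>1 \<le> i\<close> by (cases i) auto
      ultimately have n: "length (take i \<sigma>) = Suc n" by simp
      show ?thesis unfolding reduction_def n using red_aux_eq by blast
    qed
    then show ?thesis unfolding cg_reducible_wrt_def by auto
  qed
  show ?thesis unfolding cg_reducible_def
  proof (intro iffI; elim exE conjE)
    fix \<sigma> assume d: "distinct \<sigma>" "set \<sigma> = {..<r}"
    then have "length \<sigma> = r" using distinct_card[of \<sigma>] by simp
    then show "cg_reducible_wrt r (insert (mconst c) S') \<sigma> \<Longrightarrow>
      \<exists>\<sigma>. distinct \<sigma> \<and> set \<sigma> = {..<r} \<and> cg_reducible_wrt r S' \<sigma>"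
      using d key by blast
  next
    fix \<sigma> assume d: "distinct \<sigma>" "set \<sigma> = {..<r}"
    then have "length \<sigma> = r" using distinct_card[of \<sigma>] by simp
    then show "cg_reducible_wrt r S' \<sigma> \<Longrightarrow>
      \<exists>\<sigma>. distinct \<sigma> \<and> set \<sigma> = {..<r} \<and> cg_reducible_wrt r (insert (mconst c) S') \<sigma>"
      using d key by blast
  qed
qed

end
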